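(* Let $\alpha>-1$ and $\beta>0$. Let $\Phi:[0,\infty)\to\mathbb{R}$ be twice differentiable with $\Phi,\Phi',\Phi''$ bounded and continuous on $[0,\infty)$. Then for every $x\in[0,\infty)$, $$\lim_{\eta\to\infty}\eta\left[\mathcal{R}_{\eta}^{(\alpha,\beta)}(\Phi;x)-\Phi(x)\right]=(1+\alpha)\Phi'(x)+\frac{x(3\beta+1)}{2\beta}\Phi''(x).$$
   Context: The generalized Laguerre polynomials are $\mathcal{L}_k^{(\alpha)}(t)=\sum_{i=0}^{k}\frac{(-1)^i}{i!}\binom{k+\alpha}{k-i}t^i$. Put $p_{\eta,k}(x)=e^{-\eta x/2}2^{-\alpha-1}2^{-k}\mathcal{L}_k^{(\alpha)}(-\eta x/2)$ and, for $k\ge1$, $z>0$, $\mathcal{I}_{k,\eta}^{\beta}(z)=\frac{\eta\beta e^{-\eta\beta z}(\eta\beta z)^{k\beta-1}}{\Gamma(k\beta)}$. The operator is $\mathcal{R}_{\eta}^{(\alpha,\beta)}(\Phi;x)=p_{\eta,0}(x)\Phi(0)+\sum_{k=1}^{\infty}p_{\eta,k}(x)\int_0^\infty\mathcal{I}_{k,\eta}^{\beta}(z)\Phi(z)\,dz$, $\eta>0$. *)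

theory Defs
  imports "HOL-Analysis.Analysis"
begin

definition laguerre :: "real \<Rightarrow> nat \<Rightarrow> real \<Rightarrow> real" where
  "laguerre \<alpha> k t = (\<Sum>i=0..k. (-1)^i / fact i * ((real k + \<alpha>) gchoose (k - i)) * t ^ i)"

definition p_basis :: "real \<Rightarrow> real \<Rightarrow> nat \<Rightarrow> real \<Rightarrow> real" where
  "p_basis \<alpha> \<eta> k x = exp (- \<eta> * x / 2) * 2 powr (- \<alpha> - 1) * 2 powr (- real k)
      * laguerre \<alpha> k (- \<eta> * x / 2)"

definition I_kernel :: "real \<Rightarrow> real \<Rightarrow> nat \<Rightarrow> real \<Rightarrow> real" where
  "I_kernel \<beta> \<eta> k z = \<eta> * \<beta> * exp (- \<eta> * \<beta> * z) * (\<eta> * \<beta> * z) powr (real k * \<beta> - 1)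
      / Gamma (real k * \<beta>)"

definition R_op :: "real \<Rightarrow> real \<Rightarrow> real \<Rightarrow> (real \<Rightarrow> real) \<Rightarrow> real \<Rightarrow> real" where
  "R_op \<alpha> \<beta> \<eta> \<Phi> x = p_basis \<alpha> \<eta> 0 x * \<Phi> 0
     + (\<Sum>k. p_basis \<alpha> \<eta> (Suc k) x *
          (LBINT z:{0<..}. I_kernel \<beta> \<eta> (Suc k) z * \<Phi> z))"

end

theory Submission
  imports Defs
begin

definition Ls :: "real \<Rightarrow> nat \<Rightarrow> real \<Rightarrow> real" where
  "Ls \<alpha> k s = (\<Sum>i=0..k. s^i / fact i * ((real k + \<alpha>) gchoose (k - i)))"

lemma laguerre_neg: "laguerre \<alpha> k (-s) = Ls \<alpha> k s"
  unfolding laguerre_def Ls_def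
proof (rule sum.cong[OF refl])
  fix i show "(-1)^i / fact i * ((real k + \<alpha>) gchoose (k - i)) * (-s)^i = s^i / fact i * ((real k + \<alpha>) gchoose (k - i))"
  proof -
    have "(-1::real)^i * (-s)^i = ((-1)*(-s))^i" by (simp only: power_mult_distrib)
    then have "(-1::real)^i * (-s)^i = s^i" by simp
    then show ?thesis by (metis (no_types, lifting) mult.commute mult.left_commute times_divide_eq_left)
  qed
qed

lemma gch_key:
  fixes X :: real
  shows "real (Suc m) * (X gchoose Suc m) = (X - real m) * (X gchoose m)"
  using gbinomial_absorption[of m X] gbinomial_absorb_comp[of X m] by simp

lemma gch_pt:
  assumes "i \<le> n"
  shows "real (Suc n) * ((real (Suc n) + \<alpha>) gchoose (Suc n - i)) =
     (\<alpha>+1) * ((real n + (\<alpha>+1)) gchoose (n - i)) + real i * ((real n + (\<alpha>+2)) gchoose (Suc n - i))"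
proof -
  define m where "m = n - i"
  define X where "X = real n + (\<alpha>+1)"
  have e1: "Suc n - i = Suc m" using assms by (simp add: m_def)
  have e2: "real (Suc n) + \<alpha> = X" by (simp add: X_def)
  have e3: "real n + (\<alpha>+2) = X + 1" by (simp add: X_def)
  have nn: "n = m + i" using assms by (simp add: m_def)
  have n: "real (Suc n) = real (Suc m) + real i" by (simp add: nn)
  have "real (Suc n) * (X gchoose Suc m) = real (Suc m) * (X gchoose Suc m) + real i * (X gchoose Suc m)"
    by (simp add: nn algebra_simps)
  also have "\<dots> = (X - real m) * (X gchoose m) + real i * (X gchoose Suc m)" using gch_key[of m X] by linarith
  also have "X - real m = (\<alpha>+1) + real i" using assms by (simp add: X_def m_def of_nat_diff)
  also have "((\<alpha>+1) + real i) * (X gchoose m) + real i * (X gchoose Suc m) =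
     (\<alpha>+1) * (X gchoose m) + real i * ((X + 1) gchoose Suc m)"
    using gbinomial_Suc_Suc[of X m] by (simp add: algebra_simps)
  finally show ?thesis unfolding e1 e2 e3 by (simp add: X_def m_def)
qed

lemma Ls_rec:
  "real (Suc n) * Ls \<alpha> (Suc n) s = (\<alpha>+1) * Ls (\<alpha>+1) n s + s * Ls (\<alpha>+2) n s"
proof -
  have A: "(\<Sum>i=0..n. s^i / fact i * real i * ((real n + (\<alpha>+2)) gchoose (Suc n - i))) + s^Suc n / fact (Suc n) * real (Suc n)
     = s * Ls (\<alpha>+2) n s"
  proof -
    have "(\<Sum>i=0..n. s^i / fact i * real i * ((real n + (\<alpha>+2)) gchoose (Suc n - i))) + s^Suc n / fact (Suc n) * real (Suc n)
     = (\<Sum>i=0..Suc n. s^i / fact i * real i * ((real n + (\<alpha>+2)) gchoose (Suc n - i)))"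
      by (simp only: sum.atLeast0_atMost_Suc diff_self_eq_0 gbinomial_0 mult_1_right)
    also have "\<dots> = (\<Sum>i=0..n. s^Suc i / fact (Suc i) * real (Suc i) * ((real n + (\<alpha>+2)) gchoose (n - i)))"
      by (subst sum.atLeast0_atMost_Suc_shift) (simp del: fact_Suc of_nat_Suc)
    also have "\<dots> = s * Ls (\<alpha>+2) n s"
      unfolding Ls_def sum_distrib_left
    proof (rule sum.cong[OF refl])
      fix i assume "i \<in> {0..n}"
      have "fact (Suc i) = real (Suc i) * (fact i :: real)" by simp
      then show "s^Suc i / fact (Suc i) * real (Suc i) * ((real n + (\<alpha>+2)) gchoose (n - i)) =
        s * (s^i / fact i * ((real n + (\<alpha>+2)) gchoose (n - i)))"
        by (simp del: fact_Suc of_nat_Suc)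
    qed
    finally show ?thesis .
  qed
  have "real (Suc n) * Ls \<alpha> (Suc n) s =
     (\<Sum>i=0..Suc n. s^i / fact i * (real (Suc n) * ((real (Suc n) + \<alpha>) gchoose (Suc n - i))))"
    unfolding Ls_def sum_distrib_left by (simp add: mult.assoc mult.left_commute)
  also have "\<dots> = (\<Sum>i=0..n. s^i / fact i * (real (Suc n) * ((real (Suc n) + \<alpha>) gchoose (Suc n - i))))
      + s^Suc n / fact (Suc n) * real (Suc n)"
    by (simp only: sum.atLeast0_atMost_Suc diff_self_eq_0 gbinomial_0 mult_1_right)
  also have "(\<Sum>i=0..n. s^i / fact i * (real (Suc n) * ((real (Suc n) + \<alpha>) gchoose (Suc n - i)))) =
     (\<Sum>i=0..n. (\<alpha>+1) * (s^i / fact i * ((real n + (\<alpha>+1)) gchoose (n - i))) +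
                 s^i / fact i * real i * ((real n + (\<alpha>+2)) gchoose (Suc n - i)))"
  proof (rule sum.cong[OF refl])
    fix i assume "i \<in> {0..n}" hence i: "i \<le> n" by simp
    show "s^i / fact i * (real (Suc n) * ((real (Suc n) + \<alpha>) gchoose (Suc n - i))) =
      (\<alpha>+1) * (s^i / fact i * ((real n + (\<alpha>+1)) gchoose (n - i))) +
                 s^i / fact i * real i * ((real n + (\<alpha>+2)) gchoose (Suc n - i))"
      by (simp only: gch_pt[OF i] ring_distribs mult_ac)
  qed
  also have "\<dots> = (\<alpha>+1) * Ls (\<alpha>+1) n s + (\<Sum>i=0..n. s^i / fact i * real i * ((real n + (\<alpha>+2)) gchoose (Suc n - i)))"
    unfolding Ls_def by (simp add: sum.distrib sum_distrib_left add.commute)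
  finally show ?thesis using A by (simp add: add.assoc)
qed

definition qq :: "real \<Rightarrow> real \<Rightarrow> nat \<Rightarrow> real" where
  "qq \<alpha> s k = exp (-s) * 2 powr (-\<alpha>-1) * 2 powr (- real k) * Ls \<alpha> k s"

lemma p_qq: "p_basis \<alpha> \<eta> k x = qq \<alpha> (\<eta>*x/2) k"
proof -
  have "- \<eta> * x / 2 = - (\<eta>*x/2)" by simp
  then show ?thesis unfolding p_basis_def qq_def by (simp only: laguerre_neg)
qed

lemma gch_nonneg:
  assumes "\<alpha> > -1" "i \<le> k"
  shows "((real k + \<alpha>) gchoose (k - i)) \<ge> 0"
proof -
  have "(real k + \<alpha>) - real (k - i) + 1 = \<alpha> + real i + 1" using assms by (simp add: of_nat_diff)
  moreover have "\<alpha> + real i + 1 > 0" using assms by simp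
  ultimately show ?thesis unfolding gbinomial_pochhammer'
    by (intro divide_nonneg_pos) (auto intro!: less_imp_le[OF pochhammer_pos])
qed

lemma Ls_nonneg: "\<alpha> > -1 \<Longrightarrow> s \<ge> 0 \<Longrightarrow> Ls \<alpha> k s \<ge> 0"
  unfolding Ls_def by (intro sum_nonneg mult_nonneg_nonneg divide_nonneg_pos gch_nonneg) auto

lemma qq_nonneg: "\<alpha> > -1 \<Longrightarrow> s \<ge> 0 \<Longrightarrow> qq \<alpha> s k \<ge> 0"
  unfolding qq_def by (intro mult_nonneg_nonneg Ls_nonneg) auto

lemma qq_rec:
  "real (Suc k) * qq \<alpha> s (Suc k) = (\<alpha>+1) * qq (\<alpha>+1) s k + 2 * s * qq (\<alpha>+2) s k"
proof -
  define c where "c = exp (-s) * 2 powr (-\<alpha>-1) * 2 powr (- real k) / 2"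
  have q1: "qq \<alpha> s (Suc k) = c * Ls \<alpha> (Suc k) s"
    unfolding qq_def c_def by (simp add: powr_diff powr_minus field_simps)
  have q2: "qq (\<alpha>+1) s k = c * Ls (\<alpha>+1) k s"
    unfolding qq_def c_def by (simp add: powr_diff powr_minus field_simps powr_add)
  have q3: "2 * qq (\<alpha>+2) s k = c * Ls (\<alpha>+2) k s"
    unfolding qq_def c_def by (simp add: powr_diff powr_minus field_simps powr_add)
  have "real (Suc k) * (c * Ls \<alpha> (Suc k) s) = c * (real (Suc k) * Ls \<alpha> (Suc k) s)" by (rule mult.left_commute)
  also have "\<dots> = c*((\<alpha>+1)*Ls (\<alpha>+1) k s + s*Ls (\<alpha>+2) k s)" by (simp only: Ls_rec)
  also have "\<dots> = (\<alpha>+1)*(c*Ls (\<alpha>+1) k s) + s*(c*Ls (\<alpha>+2) k s)" by (simp add: ring_distribs mult_ac)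
  also have "\<dots> = (\<alpha>+1)*qq (\<alpha>+1) s k + s*(2*qq (\<alpha>+2) s k)" by (simp only: q2 q3)
  finally show ?thesis unfolding q1 by (simp only: mult.assoc)
qed

lemma negbin_sums:
  assumes "c > (0::real)"
  shows "(\<lambda>j. (1/2)^j * ((real j + c - 1) gchoose j)) sums (2 powr c)"
proof -
  have "(\<lambda>n. ((-c) gchoose n) * (-1/2)^n) sums (1 + (-1/2)) powr (-c)"
    by (rule gen_binomial_real) simp
  moreover have "((-c) gchoose n) * (-1/2)^n = (1/2)^n * ((real n + c - 1) gchoose n)" for n
  proof -
    have "((-c) gchoose n) * (-1/2)^n = ((-1)^n * (-1/2)^n) * ((c + real n - 1) gchoose n)"
      by (simp add: gbinomial_minus)
    also have "(-1::real)^n * (-1/2)^n = (1/2)^n" by (simp flip: power_mult_distrib)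
    finally show ?thesis by (simp add: add_ac)
  qed
  moreover have "(1 + (-1/2::real)) powr (-c) = 2 powr c"
    by (simp add: powr_minus powr_divide inverse_eq_divide)
  ultimately show ?thesis by simp
qed

lemma exp_sums_real: "(\<lambda>n. s^n / fact n) sums exp (s::real)"
  using exp_converges[of s] by (simp add: field_simps)

definition TT :: "real \<Rightarrow> real \<Rightarrow> nat \<times> nat \<Rightarrow> real" where
  "TT \<alpha> s ij = s^(fst ij) / fact (fst ij) * (1/2)^(fst ij + snd ij) *
       ((real (fst ij + snd ij) + \<alpha>) gchoose (snd ij))"

lemma TT_nonneg: "\<alpha> > -1 \<Longrightarrow> s \<ge> 0 \<Longrightarrow> TT \<alpha> s (i,j) \<ge> 0"
  unfolding TT_def using gch_nonneg[of \<alpha> i "i+j"] by (auto intro!: mult_nonneg_nonneg)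

lemma TT_inner:
  assumes "\<alpha> > -1" "s \<ge> 0"
  shows "((\<lambda>j. TT \<alpha> s (i,j)) has_sum (s^i / fact i * 2 powr (\<alpha>+1))) UNIV"
proof -
  define c where "c = real i + \<alpha> + 1"
  have c: "c > 0" using assms by (simp add: c_def)
  have S: "(\<lambda>j. (s^i / fact i * (1/2)^i) * ((1/2)^j * ((real j + c - 1) gchoose j))) sums
        ((s^i / fact i * (1/2)^i) * 2 powr c)"
    by (rule sums_mult[OF negbin_sums[OF c]])
  have "(s^i / fact i * (1/2)^i) * ((1/2)^j * ((real j + c - 1) gchoose j)) = TT \<alpha> s (i,j)" for j
    unfolding TT_def c_def by (simp add: power_add add_ac mult_ac)
  then have fe: "(\<lambda>j. (s^i / fact i * (1/2)^i) * ((1/2)^j * ((real j + c - 1) gchoose j))) = (\<lambda>j. TT \<alpha> s (i,j))"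
    by (rule ext)
  have eq: "(s^i / fact i * (1/2)^i) * 2 powr c = s^i / fact i * 2 powr (\<alpha>+1)"
  proof -
    have "(1/2::real)^i * 2 powr c = 2 powr (\<alpha>+1)"
      unfolding c_def by (simp add: powr_add powr_realpow power_one_over)
    then show ?thesis by (simp add: mult.assoc)
  qed
  have "(\<lambda>j. TT \<alpha> s (i,j)) sums (s^i / fact i * 2 powr (\<alpha>+1))" using S unfolding fe eq .
  then show ?thesis by (rule sums_nonneg_imp_has_sum) (rule TT_nonneg[OF assms])
qed

lemma TT_total:
  assumes "\<alpha> > -1" "s \<ge> 0"
  shows "(TT \<alpha> s has_sum (exp s * 2 powr (\<alpha>+1))) (UNIV \<times> UNIV)"
proof -
  have g: "((\<lambda>i. s^i / fact i * 2 powr (\<alpha>+1)) has_sum (exp s * 2 powr (\<alpha>+1))) UNIV"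
    by (rule sums_nonneg_imp_has_sum[OF sums_mult2[OF exp_sums_real]]) (use assms in auto)
  have inner: "\<And>i. i \<in> UNIV \<Longrightarrow> ((\<lambda>j. TT \<alpha> s (i,j)) has_sum (s^i / fact i * 2 powr (\<alpha>+1))) UNIV"
    using TT_inner[OF assms] by blast
  have sm: "TT \<alpha> s summable_on Sigma UNIV (\<lambda>_. UNIV)"
    by (rule summable_on_SigmaI[OF inner has_sum_imp_summable[OF g]]) (use TT_nonneg[OF assms] in auto)
  have "(TT \<alpha> s has_sum (exp s * 2 powr (\<alpha>+1))) (Sigma UNIV (\<lambda>_. UNIV))"
    by (rule has_sum_SigmaI[OF inner g sm])
  then show ?thesis by simp
qed

lemma qq_sums_1:
  assumes "\<alpha> > -1" "s \<ge> 0"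
  shows "qq \<alpha> s sums 1"
proof -
  define h where "h = (\<lambda>(k::nat,i::nat). (i, k - i))"
  have bij: "bij_betw h (Sigma UNIV (\<lambda>k. {0..k})) (UNIV \<times> UNIV)"
    by (rule bij_betwI[of _ _ _ "\<lambda>(i,j). (i+j, i)"]) (auto simp: h_def)
  have "((\<lambda>x. TT \<alpha> s (h x)) has_sum (exp s * 2 powr (\<alpha>+1))) (Sigma UNIV (\<lambda>k. {0..k}))"
    using has_sum_reindex_bij_betw[OF bij, of "TT \<alpha> s"] TT_total[OF assms] by simp
  then have "((\<lambda>k. \<Sum>i=0..k. TT \<alpha> s (h (k,i))) has_sum (exp s * 2 powr (\<alpha>+1))) UNIV"
    by (rule has_sum_Sigma'[where b = "\<lambda>k. \<Sum>i=0..k. TT \<alpha> s (h (k,i))"]) (auto intro: has_sum_finite)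
  moreover have "(\<Sum>i=0..k. TT \<alpha> s (h (k,i))) = 2 powr (- real k) * Ls \<alpha> k s" for k
    unfolding Ls_def sum_distrib_left
  proof (rule sum.cong[OF refl])
    fix i assume "i \<in> {0..k}"
    then have ik: "i + (k - i) = k" by simp
    have p: "(1/2::real)^k = 2 powr (- real k)" by (simp add: powr_minus powr_realpow power_one_over inverse_eq_divide)
    show "TT \<alpha> s (h (k,i)) = 2 powr (- real k) * (s^i / fact i * ((real k + \<alpha>) gchoose (k - i)))"
      unfolding TT_def h_def by (simp add: ik p mult_ac)
  qed
  ultimately have "(\<lambda>k. 2 powr (- real k) * Ls \<alpha> k s) sums (exp s * 2 powr (\<alpha>+1))"
    by (simp add: has_sum_imp_sums)
  then have "(\<lambda>k. (exp (-s) * 2 powr (-\<alpha>-1)) * (2 powr (- real k) * Ls \<alpha> k s)) sums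
      ((exp (-s) * 2 powr (-\<alpha>-1)) * (exp s * 2 powr (\<alpha>+1)))"
    by (rule sums_mult)
  moreover have "(exp (-s) * 2 powr (-\<alpha>-1)) * (exp s * 2 powr (\<alpha>+1)) = 1"
  proof -
    have "exp (-s) * exp s = 1" by (simp add: exp_minus)
    moreover have "2 powr (-\<alpha>-1) * 2 powr (\<alpha>+1) = (1::real)" by (simp flip: powr_add)
    ultimately show ?thesis by (metis mult.assoc mult.left_commute mult_1_right)
  qed
  ultimately show ?thesis unfolding qq_def by (simp add: mult_ac)
qed

definition ff :: "nat \<Rightarrow> nat \<Rightarrow> real" where "ff k m = (\<Prod>i<m. real k - real i)"

lemma ff_0 [simp]: "ff k 0 = 1" by (simp add: ff_def)
lemma ff_Suc: "ff (Suc k) (Suc m) = real (Suc k) * ff k m"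
  unfolding ff_def by (subst prod.lessThan_Suc_shift) simp
lemma ff_zero: "ff 0 (Suc m) = 0"
  unfolding ff_def by (subst prod.lessThan_Suc_shift) simp

fun FF :: "real \<Rightarrow> real \<Rightarrow> nat \<Rightarrow> real" where
  "FF \<alpha> s 0 = 1"
| "FF \<alpha> s (Suc m) = (\<alpha>+1) * FF (\<alpha>+1) s m + 2 * s * FF (\<alpha>+2) s m"

lemma qq_ff_sums:
  assumes "s \<ge> 0"
  shows "\<alpha> > -1 \<Longrightarrow> (\<lambda>k. qq \<alpha> s k * ff k m) sums FF \<alpha> s m"
proof (induction m arbitrary: \<alpha>)
  case 0
  then show ?case using qq_sums_1[OF 0 assms] by simp
next
  case (Suc m)
  have a1: "\<alpha>+1 > -1" "\<alpha>+2 > -1" using Suc.prems by auto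
  have "(\<lambda>k. (\<alpha>+1) * (qq (\<alpha>+1) s k * ff k m) + 2 * s * (qq (\<alpha>+2) s k * ff k m)) sums
        ((\<alpha>+1) * FF (\<alpha>+1) s m + 2 * s * FF (\<alpha>+2) s m)"
    by (intro sums_add sums_mult Suc.IH a1)
  moreover have "(\<alpha>+1) * (qq (\<alpha>+1) s k * ff k m) + 2 * s * (qq (\<alpha>+2) s k * ff k m) =
      qq \<alpha> s (Suc k) * ff (Suc k) (Suc m)" for k
  proof -
    have "qq \<alpha> s (Suc k) * ff (Suc k) (Suc m) = ff k m * (real (Suc k) * qq \<alpha> s (Suc k))"
      by (simp only: ff_Suc mult_ac)
    also have "\<dots> = ff k m * ((\<alpha>+1) * qq (\<alpha>+1) s k + 2 * s * qq (\<alpha>+2) s k)"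
      by (simp only: qq_rec)
    finally show ?thesis by (simp add: ring_distribs mult_ac)
  qed
  ultimately have "(\<lambda>k. qq \<alpha> s (Suc k) * ff (Suc k) (Suc m)) sums FF \<alpha> s (Suc m)" by simp
  then show ?case by (subst (asm) sums_Suc_iff) (simp add: ff_zero)
qed

lemma aux_field:
  fixes L E P G Q :: real
  assumes "G > 0" "L > 0" "E > 0"
  shows "L * (1/E) * P / G * (Q / L^m) = L / (L^m * G) * (P * Q / E)"
  using assms by (simp add: field_simps)

lemma kernel_eq:
  assumes L: "L = \<eta>*\<beta>" "\<eta> > 0" "\<beta> > 0" and c: "c = real k * \<beta>" "k > 0"
  shows "indicator {0<..} z * (I_kernel \<beta> \<eta> k z * z^m) =
    (L / (L^m * Gamma c)) * (indicator {0..} (L*z) * (L*z) powr (c + real m - 1) / exp (L*z))"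
proof -
  have Lp: "L > 0" using L by simp
  have cp: "c > 0" using c assms by simp
  consider "z > 0" | "z = 0" | "z < 0" by linarith
  then show ?thesis
  proof cases
    case 1
    have Lz: "L*z > 0" using 1 Lp by simp
    have "(L*z) powr (c + real m - 1) = (L*z) powr ((c - 1) + real m)" by (simp add: algebra_simps)
    also have "\<dots> = (L*z) powr (c - 1) * (L*z) powr (real m)" by (rule powr_add)
    also have "\<dots> = (L*z) powr (c - 1) * (L*z)^m" using Lz by (simp add: powr_realpow)
    finally have "(L*z) powr (c + real m - 1) = (L*z) powr (c - 1) * (L*z)^m" .
    note pw = this
    have zm: "z^m = (L*z)^m / L^m" using Lp by (simp add: power_mult_distrib)
    have I: "I_kernel \<beta> \<eta> k z = L * (1/exp(L*z)) * (L*z) powr (c-1) / Gamma c"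
    proof -
      have "exp (- \<eta> * \<beta> * z) = 1 / exp(L*z)" unfolding L(1) by (simp add: exp_minus inverse_eq_divide)
      then show ?thesis unfolding I_kernel_def L(1) c(1) by simp
    qed
    have "indicator {0<..} z * (I_kernel \<beta> \<eta> k z * z^m) = I_kernel \<beta> \<eta> k z * z^m" using 1 by simp
    also have "\<dots> = L * (1/exp(L*z)) * (L*z) powr (c-1) / Gamma c * ((L*z)^m / L^m)" by (simp only: I zm)
    also have "\<dots> = L / (L^m * Gamma c) * ((L*z) powr (c-1) * (L*z)^m / exp(L*z))"
      by (rule aux_field) (use cp Lp in auto)
    also have "\<dots> = (L / (L^m * Gamma c)) * (indicator {0..} (L*z) * (L*z) powr (c + real m - 1) / exp (L*z))"
      using Lz by (simp add: pw)
    finally show ?thesis .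
  next
    case 2 then show ?thesis by simp
  next
    case 3
    then have "L*z < 0" using Lp by (simp add: mult_pos_neg)
    then show ?thesis using 3 by simp
  qed
qed

lemma kernel_moment:
  assumes "\<eta> > 0" "\<beta> > 0" "k > 0"
  shows "set_integrable lborel {0<..} (\<lambda>z. I_kernel \<beta> \<eta> k z * z^m)"
    and "(LBINT z:{0<..}. I_kernel \<beta> \<eta> k z * z^m) = pochhammer (real k * \<beta>) m / (\<eta>*\<beta>)^m"
proof -
  define L where "L = \<eta>*\<beta>"
  define c where "c = real k * \<beta>"
  have Lp: "L > 0" and cp: "c > 0" using assms by (auto simp: L_def c_def)
  define g where "g = (\<lambda>t::real. indicator {0..} t * t powr (c + real m - 1) / exp t)"
  define K where "K = L / (L^m * Gamma c)"
  have Kp: "K > 0" using Lp cp by (simp add: K_def)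
  have feq: "(\<lambda>z. indicator {0<..} z *\<^sub>R (I_kernel \<beta> \<eta> k z * z^m)) = (\<lambda>z. K * g (L*z))"
    by (rule ext) (simp add: kernel_eq[OF L_def assms(1,2) c_def assms(3)] K_def g_def)
  have gm[measurable]: "g \<in> borel_measurable borel" unfolding g_def by measurable
  have gnn: "g t \<ge> 0" for t unfolding g_def by (auto simp: indicator_def)
  have G: "Gamma (c + real m) = (\<integral>\<^sup>+t. ennreal (g t) \<partial>lborel)"
    unfolding g_def using Gamma_conv_nn_integral_real[of "c + real m"] cp by simp
  also have "\<dots> = ennreal \<bar>L\<bar> * (\<integral>\<^sup>+x. ennreal (g (0 + L*x)) \<partial>lborel)"
    by (rule nn_integral_real_affine) (use Lp in auto)
  finally have G2: "ennreal (Gamma (c + real m)) = ennreal L * (\<integral>\<^sup>+x. ennreal (g (L*x)) \<partial>lborel)"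
    using Lp by simp
  have "(\<integral>\<^sup>+x. ennreal (K * g (L*x)) \<partial>lborel) = ennreal K * (\<integral>\<^sup>+x. ennreal (g (L*x)) \<partial>lborel)"
    using Kp gnn by (simp add: ennreal_mult nn_integral_cmult)
  also have "\<dots> = ennreal (K / L) * (ennreal L * (\<integral>\<^sup>+x. ennreal (g (L*x)) \<partial>lborel))"
    using Kp Lp by (simp add: ennreal_mult[symmetric] mult.assoc[symmetric])
  also have "\<dots> = ennreal (K / L) * ennreal (Gamma (c + real m))"
    by (simp add: G2)
  also have "\<dots> = ennreal (K / L * Gamma (c + real m))"
    by (rule ennreal_mult[symmetric]) (use Kp Lp cp in auto)
  finally have NN: "(\<integral>\<^sup>+x. ennreal (K * g (L*x)) \<partial>lborel) = ennreal (K / L * Gamma (c + real m))" .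
  have cn: "c \<notin> \<int>\<^sub>\<le>\<^sub>0" using cp nonpos_Ints_nonpos by force
  have val: "K / L * Gamma (c + real m) = pochhammer c m / L^m"
    using Lp cp by (simp add: K_def pochhammer_Gamma[OF cn] field_simps)
  have meas: "(\<lambda>x. K * g (L*x)) \<in> borel_measurable lborel" by measurable
  have int: "integrable lborel (\<lambda>x. K * g (L*x))"
    by (rule integrableI_nn_integral_finite[OF meas _ NN]) (use Kp gnn in auto)
  then show "set_integrable lborel {0<..} (\<lambda>z. I_kernel \<beta> \<eta> k z * z^m)"
    unfolding set_integrable_def feq .
  have "(LBINT z:{0<..}. I_kernel \<beta> \<eta> k z * z^m) = integral\<^sup>L lborel (\<lambda>x. K * g (L*x))"
    unfolding set_lebesgue_integral_def feq ..
  also have "\<dots> = enn2real (\<integral>\<^sup>+x. ennreal (K * g (L*x)) \<partial>lborel)"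
    by (rule integral_eq_nn_integral[OF meas]) (use Kp gnn in auto)
  also have "\<dots> = pochhammer c m / L^m" using NN val Kp Lp cp gnn
    by (simp add: pochhammer_pos less_imp_le)
  finally show "(LBINT z:{0<..}. I_kernel \<beta> \<eta> k z * z^m) = pochhammer (real k * \<beta>) m / (\<eta>*\<beta>)^m"
    by (simp add: L_def c_def)
qed

definition JJ :: "real \<Rightarrow> real \<Rightarrow> (real \<Rightarrow> real) \<Rightarrow> nat \<Rightarrow> real" where
  "JJ \<beta> \<eta> g k = (LBINT z:{0<..}. I_kernel \<beta> \<eta> k z * g z)"

definition GG :: "real \<Rightarrow> real \<Rightarrow> (real \<Rightarrow> real) \<Rightarrow> nat \<Rightarrow> real" where
  "GG \<beta> \<eta> g k = (if k = 0 then g 0 else JJ \<beta> \<eta> g k)"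

lemma R_sums:
  assumes "summable (\<lambda>k. p_basis \<alpha> \<eta> (Suc k) x * JJ \<beta> \<eta> g (Suc k))"
  shows "(\<lambda>k. p_basis \<alpha> \<eta> k x * GG \<beta> \<eta> g k) sums R_op \<alpha> \<beta> \<eta> g x"
proof -
  have "(\<lambda>k. p_basis \<alpha> \<eta> (Suc k) x * GG \<beta> \<eta> g (Suc k)) sums
      (\<Sum>k. p_basis \<alpha> \<eta> (Suc k) x * (LBINT z:{0<..}. I_kernel \<beta> \<eta> (Suc k) z * g z))"
    using summable_sums[OF assms] by (simp add: GG_def JJ_def)
  then have "(\<lambda>k. p_basis \<alpha> \<eta> k x * GG \<beta> \<eta> g k) sums
      ((\<Sum>k. p_basis \<alpha> \<eta> (Suc k) x * (LBINT z:{0<..}. I_kernel \<beta> \<eta> (Suc k) z * g z)) +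
        p_basis \<alpha> \<eta> 0 x * GG \<beta> \<eta> g 0)"
    by (subst (asm) sums_Suc_iff)
  then show ?thesis unfolding R_op_def by (simp add: GG_def add.commute)
qed

lemma poly_J:
  assumes "\<eta> > 0" "\<beta> > 0" "k > 0"
  shows "set_integrable lborel {0<..} (\<lambda>z. I_kernel \<beta> \<eta> k z * (\<Sum>i\<le>n. c i * z^i))"
    and "JJ \<beta> \<eta> (\<lambda>z. \<Sum>i\<le>n. c i * z^i) k = (\<Sum>i\<le>n. c i * (pochhammer (real k * \<beta>) i / (\<eta>*\<beta>)^i))"
proof -
  have eq: "(\<lambda>z. indicator {0<..} z *\<^sub>R (I_kernel \<beta> \<eta> k z * (\<Sum>i\<le>n. c i * z^i))) =
       (\<lambda>z. \<Sum>i\<le>n. c i * (indicator {0<..} z *\<^sub>R (I_kernel \<beta> \<eta> k z * z^i)))"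
    by (rule ext) (simp add: sum_distrib_left mult_ac)
  have ii: "integrable lborel (\<lambda>z. indicator {0<..} z *\<^sub>R (I_kernel \<beta> \<eta> k z * z^i))" for i
    using kernel_moment(1)[OF assms, of i] unfolding set_integrable_def .
  show "set_integrable lborel {0<..} (\<lambda>z. I_kernel \<beta> \<eta> k z * (\<Sum>i\<le>n. c i * z^i))"
    unfolding set_integrable_def eq using ii by auto
  have "JJ \<beta> \<eta> (\<lambda>z. \<Sum>i\<le>n. c i * z^i) k =
      (\<Sum>i\<le>n. c i * integral\<^sup>L lborel (\<lambda>z. indicator {0<..} z *\<^sub>R (I_kernel \<beta> \<eta> k z * z^i)))"
    unfolding JJ_def set_lebesgue_integral_def eq
    using ii by (simp add: integral_sum)
  also have "\<dots> = (\<Sum>i\<le>n. c i * (pochhammer (real k * \<beta>) i / (\<eta>*\<beta>)^i))"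
    using kernel_moment(2)[OF assms] unfolding set_lebesgue_integral_def by simp
  finally show "JJ \<beta> \<eta> (\<lambda>z. \<Sum>i\<le>n. c i * z^i) k = (\<Sum>i\<le>n. c i * (pochhammer (real k * \<beta>) i / (\<eta>*\<beta>)^i))" .
qed

lemma poly_G:
  assumes "\<eta> > 0" "\<beta> > 0"
  shows "GG \<beta> \<eta> (\<lambda>z. \<Sum>i\<le>n. c i * z^i) k = (\<Sum>i\<le>n. c i * (pochhammer (real k * \<beta>) i / (\<eta>*\<beta>)^i))"
proof (cases "k = 0")
  case True
  have "c i * 0^i = c i * (pochhammer (real k * \<beta>) i / (\<eta>*\<beta>)^i)" for i
    using True by (cases i) (auto simp: pochhammer_0_left)
  then show ?thesis unfolding GG_def using True by simp
next
  case False
  then show ?thesis unfolding GG_def using poly_J(2)[OF assms] by simp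
qed

definition EP :: "real \<Rightarrow> real \<Rightarrow> real \<Rightarrow> nat \<Rightarrow> real" where
  "EP \<alpha> \<beta> s i = (if i = 0 then 1
     else if i = 1 then \<beta> * FF \<alpha> s 1
     else if i = 2 then \<beta>^2 * FF \<alpha> s 2 + (\<beta>^2 + \<beta>) * FF \<alpha> s 1
     else if i = 3 then \<beta>^3 * FF \<alpha> s 3 + (3*\<beta>^3 + 3*\<beta>^2) * FF \<alpha> s 2 + (\<beta>^3 + 3*\<beta>^2 + 2*\<beta>) * FF \<alpha> s 1
     else \<beta>^4 * FF \<alpha> s 4 + (6*\<beta>^4 + 6*\<beta>^3) * FF \<alpha> s 3 + (7*\<beta>^4 + 18*\<beta>^3 + 11*\<beta>^2) * FF \<alpha> s 2
        + (\<beta>^4 + 6*\<beta>^3 + 11*\<beta>^2 + 6*\<beta>) * FF \<alpha> s 1)"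

lemma ff1: "ff k 1 = real k" by (simp add: ff_def)
lemma ff_Suc0 [simp]: "ff k (Suc 0) = real k" by (simp add: ff_def)
lemma ff2: "ff k 2 = real k * (real k - 1)" by (simp add: ff_def eval_nat_numeral)
lemma ff3: "ff k 3 = real k * (real k - 1) * (real k - 2)" by (simp add: ff_def eval_nat_numeral)
lemma ff4: "ff k 4 = real k * (real k - 1) * (real k - 2) * (real k - 3)" by (simp add: ff_def eval_nat_numeral)

lemma poch_ff:
  fixes k :: nat
  assumes "i \<le> 4"
  shows "pochhammer (real k * \<beta>) i =
    (if i = 0 then 1
     else if i = 1 then \<beta> * ff k 1
     else if i = 2 then \<beta>^2 * ff k 2 + (\<beta>^2 + \<beta>) * ff k 1
     else if i = 3 then \<beta>^3 * ff k 3 + (3*\<beta>^3 + 3*\<beta>^2) * ff k 2 + (\<beta>^3 + 3*\<beta>^2 + 2*\<beta>) * ff k 1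
     else \<beta>^4 * ff k 4 + (6*\<beta>^4 + 6*\<beta>^3) * ff k 3 + (7*\<beta>^4 + 18*\<beta>^3 + 11*\<beta>^2) * ff k 2
        + (\<beta>^4 + 6*\<beta>^3 + 11*\<beta>^2 + 6*\<beta>) * ff k 1)"
proof -
  have "i = 0 \<or> i = 1 \<or> i = 2 \<or> i = 3 \<or> i = 4" using assms by auto
  then show ?thesis
    by (elim disjE; simp only: ff1 ff2 ff3 ff4; simp add: pochhammer_Suc eval_nat_numeral algebra_simps)
qed

lemma EP_sums:
  assumes "\<alpha> > -1" "s \<ge> 0" "i \<le> 4"
  shows "(\<lambda>k. qq \<alpha> s k * pochhammer (real k * \<beta>) i) sums EP \<alpha> \<beta> s i"
proof -
  have F: "\<And>m. (\<lambda>k. qq \<alpha> s k * ff k m) sums FF \<alpha> s m" using qq_ff_sums[OF assms(2,1)] .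
  have "i = 0 \<or> i = 1 \<or> i = 2 \<or> i = 3 \<or> i = 4" using assms by auto
  then show ?thesis
  proof (elim disjE)
    assume i: "i = 0"
    show ?thesis using F[of 0] by (simp add: i EP_def)
  next
    assume i: "i = 1"
    have "(\<lambda>k. \<beta> * (qq \<alpha> s k * ff k 1)) sums (\<beta> * FF \<alpha> s 1)" by (intro sums_mult F)
    then show ?thesis using poch_ff[of i k \<beta> for k] by (simp add: i EP_def mult_ac ff1)
  next
    assume i: "i = 2"
    have "(\<lambda>k. \<beta>^2 * (qq \<alpha> s k * ff k 2) + (\<beta>^2 + \<beta>) * (qq \<alpha> s k * ff k 1)) sums
        (\<beta>^2 * FF \<alpha> s 2 + (\<beta>^2 + \<beta>) * FF \<alpha> s 1)" by (intro sums_add sums_mult F)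
    moreover have "\<beta>^2 * (qq \<alpha> s k * ff k 2) + (\<beta>^2 + \<beta>) * (qq \<alpha> s k * ff k 1) =
        qq \<alpha> s k * pochhammer (real k * \<beta>) i" for k
      by (subst poch_ff) (simp_all add: i algebra_simps)
    ultimately show ?thesis by (simp add: i EP_def)
  next
    assume i: "i = 3"
    have "(\<lambda>k. \<beta>^3 * (qq \<alpha> s k * ff k 3) + (3*\<beta>^3 + 3*\<beta>^2) * (qq \<alpha> s k * ff k 2) + (\<beta>^3 + 3*\<beta>^2 + 2*\<beta>) * (qq \<alpha> s k * ff k 1)) sums
        (\<beta>^3 * FF \<alpha> s 3 + (3*\<beta>^3 + 3*\<beta>^2) * FF \<alpha> s 2 + (\<beta>^3 + 3*\<beta>^2 + 2*\<beta>) * FF \<alpha> s 1)"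
      by (intro sums_add sums_mult F)
    moreover have "\<beta>^3 * (qq \<alpha> s k * ff k 3) + (3*\<beta>^3 + 3*\<beta>^2) * (qq \<alpha> s k * ff k 2) + (\<beta>^3 + 3*\<beta>^2 + 2*\<beta>) * (qq \<alpha> s k * ff k 1) =
        qq \<alpha> s k * pochhammer (real k * \<beta>) i" for k
      by (subst poch_ff) (simp_all add: i algebra_simps)
    ultimately show ?thesis by (simp add: i EP_def)
  next
    assume i: "i = 4"
    have "(\<lambda>k. \<beta>^4 * (qq \<alpha> s k * ff k 4) + (6*\<beta>^4 + 6*\<beta>^3) * (qq \<alpha> s k * ff k 3) + (7*\<beta>^4 + 18*\<beta>^3 + 11*\<beta>^2) * (qq \<alpha> s k * ff k 2)
        + (\<beta>^4 + 6*\<beta>^3 + 11*\<beta>^2 + 6*\<beta>) * (qq \<alpha> s k * ff k 1)) sums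
        (\<beta>^4 * FF \<alpha> s 4 + (6*\<beta>^4 + 6*\<beta>^3) * FF \<alpha> s 3 + (7*\<beta>^4 + 18*\<beta>^3 + 11*\<beta>^2) * FF \<alpha> s 2
        + (\<beta>^4 + 6*\<beta>^3 + 11*\<beta>^2 + 6*\<beta>) * FF \<alpha> s 1)"
      by (intro sums_add sums_mult F)
    moreover have "\<beta>^4 * (qq \<alpha> s k * ff k 4) + (6*\<beta>^4 + 6*\<beta>^3) * (qq \<alpha> s k * ff k 3) + (7*\<beta>^4 + 18*\<beta>^3 + 11*\<beta>^2) * (qq \<alpha> s k * ff k 2)
        + (\<beta>^4 + 6*\<beta>^3 + 11*\<beta>^2 + 6*\<beta>) * (qq \<alpha> s k * ff k 1) =
        qq \<alpha> s k * pochhammer (real k * \<beta>) i" for k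
      by (subst poch_ff) (simp_all add: i algebra_simps)
    ultimately show ?thesis by (simp add: i EP_def)
  qed
qed

lemma ej_expand: "(z - x)^j = (\<Sum>i\<le>j. (of_nat (j choose i) * (-x)^(j-i)) * (z::real)^i)"
  using binomial_ring[of z "-x" j] by (simp add: mult_ac)

definition Mj :: "real \<Rightarrow> real \<Rightarrow> real \<Rightarrow> real \<Rightarrow> nat \<Rightarrow> real" where
  "Mj \<alpha> \<beta> \<eta> x j = (\<Sum>i\<le>j. (of_nat (j choose i) * (-x)^(j-i)) * (EP \<alpha> \<beta> (\<eta>*x/2) i / (\<eta>*\<beta>)^i))"

lemma GG_ej:
  assumes "\<eta> > 0" "\<beta> > 0"
  shows "GG \<beta> \<eta> (\<lambda>z. (z-x)^j) k =
    (\<Sum>i\<le>j. (of_nat (j choose i) * (-x)^(j-i)) * (pochhammer (real k * \<beta>) i / (\<eta>*\<beta>)^i))"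
  unfolding ej_expand by (rule poly_G[OF assms])

lemma M_sums:
  assumes "\<alpha> > -1" "\<beta> > 0" "\<eta> > 0" "x \<ge> 0" "j \<le> 4"
  shows "(\<lambda>k. p_basis \<alpha> \<eta> k x * GG \<beta> \<eta> (\<lambda>z. (z-x)^j) k) sums Mj \<alpha> \<beta> \<eta> x j"
proof -
  have s: "\<eta>*x/2 \<ge> 0" using assms by simp
  have "(\<lambda>k. \<Sum>i\<le>j. ((of_nat (j choose i) * (-x)^(j-i)) / (\<eta>*\<beta>)^i) *
           (qq \<alpha> (\<eta>*x/2) k * pochhammer (real k * \<beta>) i)) sums
        (\<Sum>i\<le>j. ((of_nat (j choose i) * (-x)^(j-i)) / (\<eta>*\<beta>)^i) * EP \<alpha> \<beta> (\<eta>*x/2) i)"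
    by (intro sums_sum sums_mult EP_sums[OF assms(1) s]) (use assms in auto)
  moreover have "(\<Sum>i\<le>j. ((of_nat (j choose i) * (-x)^(j-i)) / (\<eta>*\<beta>)^i) *
           (qq \<alpha> (\<eta>*x/2) k * pochhammer (real k * \<beta>) i)) = p_basis \<alpha> \<eta> k x * GG \<beta> \<eta> (\<lambda>z. (z-x)^j) k" for k
    unfolding GG_ej[OF assms(3,2)] p_qq sum_distrib_left by (rule sum.cong) auto
  moreover have "(\<Sum>i\<le>j. ((of_nat (j choose i) * (-x)^(j-i)) / (\<eta>*\<beta>)^i) * EP \<alpha> \<beta> (\<eta>*x/2) i) = Mj \<alpha> \<beta> \<eta> x j"
    unfolding Mj_def by (rule sum.cong) auto
  ultimately show ?thesis by simp
qed

lemma I_nonneg: "\<eta> > 0 \<Longrightarrow> \<beta> > 0 \<Longrightarrow> k > 0 \<Longrightarrow> I_kernel \<beta> \<eta> k z \<ge> 0"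
  unfolding I_kernel_def by (intro divide_nonneg_pos mult_nonneg_nonneg) auto

lemma ej_integrable:
  assumes "\<eta> > 0" "\<beta> > 0" "k > 0"
  shows "set_integrable lborel {0<..} (\<lambda>z. I_kernel \<beta> \<eta> k z * (z-x)^j)"
  unfolding ej_expand by (rule poly_J(1)[OF assms])

lemma I_cont:
  assumes "\<eta> > 0" "\<beta> > 0" "k > 0" shows "continuous_on {0<..} (I_kernel \<beta> \<eta> k)"
proof -
  have G: "Gamma (real k * \<beta>) \<noteq> 0" using assms by (intro less_imp_neq[symmetric] Gamma_real_pos) simp
  show ?thesis unfolding I_kernel_def by (intro continuous_intros) (use assms in \<open>auto simp: G\<close>)
qed

lemma GG_bound:
  assumes "\<eta> > 0" "\<beta> > 0" "a \<ge> 0" "b \<ge> 0"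
    and rc: "continuous_on {0<..} r"
    and rb: "\<And>z. z \<ge> 0 \<Longrightarrow> \<bar>r z\<bar> \<le> a * (z-x)^2 + b * (z-x)^4"
  shows "\<bar>GG \<beta> \<eta> r k\<bar> \<le> a * GG \<beta> \<eta> (\<lambda>z. (z-x)^2) k + b * GG \<beta> \<eta> (\<lambda>z. (z-x)^4) k"
    and "k > 0 \<Longrightarrow> set_integrable lborel {0<..} (\<lambda>z. I_kernel \<beta> \<eta> k z * r z)"
proof -
  show 1: "set_integrable lborel {0<..} (\<lambda>z. I_kernel \<beta> \<eta> k z * r z)" if k: "k > 0"
  proof (rule set_integrable_bound[where f = "\<lambda>z. I_kernel \<beta> \<eta> k z * (a * (z-x)^2 + b * (z-x)^4)"])
    show "set_integrable lborel {0<..} (\<lambda>z. I_kernel \<beta> \<eta> k z * (a * (z-x)^2 + b * (z-x)^4))"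
      using set_integral_add(1)[OF set_integrable_mult_right[OF ej_integrable[OF assms(1,2) k, of x 2], of a]
                                   set_integrable_mult_right[OF ej_integrable[OF assms(1,2) k, of x 4], of b]]
      by (simp add: algebra_simps)
    have cc: "continuous_on {0<..} (\<lambda>z. I_kernel \<beta> \<eta> k z * r z)"
      by (intro continuous_intros I_cont assms rc k)
    show "set_borel_measurable lborel {0<..} (\<lambda>z. I_kernel \<beta> \<eta> k z * r z)"
      using borel_measurable_continuous_on_indicator[OF _ cc] unfolding set_borel_measurable_def by simp
    show "AE z in lborel. z \<in> {0<..} \<longrightarrow> norm (I_kernel \<beta> \<eta> k z * r z) \<le>
           norm (I_kernel \<beta> \<eta> k z * (a * (z-x)^2 + b * (z-x)^4))"
    proof (rule AE_I2, rule impI)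
      fix z :: real assume "z \<in> {0<..}"
      have "\<bar>r z\<bar> \<le> \<bar>a * (z-x)^2 + b * (z-x)^4\<bar>" using rb[of z] \<open>z \<in> {0<..}\<close> by auto
      then show "norm (I_kernel \<beta> \<eta> k z * r z) \<le> norm (I_kernel \<beta> \<eta> k z * (a * (z-x)^2 + b * (z-x)^4))"
        by (simp add: abs_mult mult_left_mono)
    qed
  qed
  show "\<bar>GG \<beta> \<eta> r k\<bar> \<le> a * GG \<beta> \<eta> (\<lambda>z. (z-x)^2) k + b * GG \<beta> \<eta> (\<lambda>z. (z-x)^4) k"
  proof (cases "k = 0")
    case True then show ?thesis using rb[of 0] by (simp add: GG_def)
  next
    case False
    then have k: "k > 0" by simp
    have i2: "set_integrable lborel {0<..} (\<lambda>z. I_kernel \<beta> \<eta> k z * (z-x)^2)"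
     and i4: "set_integrable lborel {0<..} (\<lambda>z. I_kernel \<beta> \<eta> k z * (z-x)^4)"
      by (rule ej_integrable[OF assms(1,2) k])+
    have ir: "set_integrable lborel {0<..} (\<lambda>z. I_kernel \<beta> \<eta> k z * r z)" by (rule 1[OF k])
    have ib: "set_integrable lborel {0<..} (\<lambda>z. a * (I_kernel \<beta> \<eta> k z * (z-x)^2) + b * (I_kernel \<beta> \<eta> k z * (z-x)^4))"
      using i2 i4 by (intro set_integral_add set_integrable_mult_right)
    have eqb: "(LBINT z:{0<..}. a * (I_kernel \<beta> \<eta> k z * (z-x)^2) + b * (I_kernel \<beta> \<eta> k z * (z-x)^4)) =
        a * JJ \<beta> \<eta> (\<lambda>z. (z-x)^2) k + b * JJ \<beta> \<eta> (\<lambda>z. (z-x)^4) k"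
      unfolding JJ_def using i2 i4 by (simp add: set_integral_add set_integrable_mult_right)
    have pt: "\<bar>I_kernel \<beta> \<eta> k z * r z\<bar> \<le> a * (I_kernel \<beta> \<eta> k z * (z-x)^2) + b * (I_kernel \<beta> \<eta> k z * (z-x)^4)"
      if "z \<in> {0<..}" for z
    proof -
      have I0: "I_kernel \<beta> \<eta> k z \<ge> 0" by (rule I_nonneg[OF assms(1,2) k])
      have "\<bar>I_kernel \<beta> \<eta> k z * r z\<bar> = I_kernel \<beta> \<eta> k z * \<bar>r z\<bar>" using I0 by (simp add: abs_mult)
      also have "\<dots> \<le> I_kernel \<beta> \<eta> k z * (a * (z-x)^2 + b * (z-x)^4)"
        using rb[of z] that I0 by (intro mult_left_mono) auto
      finally show ?thesis by (simp add: algebra_simps)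
    qed
    have u: "JJ \<beta> \<eta> r k \<le> a * JJ \<beta> \<eta> (\<lambda>z. (z-x)^2) k + b * JJ \<beta> \<eta> (\<lambda>z. (z-x)^4) k"
      unfolding eqb[symmetric] unfolding JJ_def
      by (rule set_integral_mono[OF ir ib]) (use pt in force)
    have l: "- JJ \<beta> \<eta> r k \<le> a * JJ \<beta> \<eta> (\<lambda>z. (z-x)^2) k + b * JJ \<beta> \<eta> (\<lambda>z. (z-x)^4) k"
    proof -
      have "- JJ \<beta> \<eta> r k = (LBINT z:{0<..}. - (I_kernel \<beta> \<eta> k z * r z))"
        unfolding JJ_def by (simp add: set_integral_uminus[OF ir])
      also have "\<dots> \<le> (LBINT z:{0<..}. a * (I_kernel \<beta> \<eta> k z * (z-x)^2) + b * (I_kernel \<beta> \<eta> k z * (z-x)^4))"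
      proof (rule set_integral_mono)
        show "set_integrable lborel {0<..} (\<lambda>z. - (I_kernel \<beta> \<eta> k z * r z))"
          using set_integrable_mult_right[OF ir, of "-1"] by simp
      qed (use ib pt in force)+
      finally show ?thesis unfolding eqb .
    qed
    show ?thesis using u l k by (simp add: GG_def abs_le_iff)
  qed
qed

lemma M0: "Mj \<alpha> \<beta> \<eta> x 0 = 1" by (simp add: Mj_def EP_def)

lemma M1: assumes "\<eta> > 0" "\<beta> > 0" shows "\<eta> * Mj \<alpha> \<beta> \<eta> x 1 = \<alpha> + 1"
  using assms by (simp add: Mj_def EP_def field_simps)

lemma M2: assumes "\<eta> > 0" "\<beta> > 0"
  shows "\<eta> * Mj \<alpha> \<beta> \<eta> x 2 = x * (3 + 1/\<beta>) + (1/\<beta> + 3 + \<alpha>/\<beta> + 4*\<alpha> + \<alpha>^2) / \<eta>"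
  using assms by (simp add: Mj_def EP_def eval_nat_numeral field_simps)

lemma M4: assumes "\<eta> > 0" "\<beta> > 0"
  shows "Mj \<alpha> \<beta> \<eta> x 4 =
    (3*x^2/\<beta>^2 + 18*x^2/\<beta> + 27*x^2) / \<eta>^2
  + (6*x/\<beta>^3 + 47*x/\<beta>^2 + 150*x/\<beta> + 181*x + 14*\<alpha>*x/\<beta>^2 + 78*\<alpha>*x/\<beta> + 124*\<alpha>*x
     + 6*\<alpha>^2*x/\<beta> + 18*\<alpha>^2*x) / \<eta>^3
  + (6/\<beta>^3 + 33/\<beta>^2 + 78/\<beta> + 75 + 6*\<alpha>/\<beta>^3 + 44*\<alpha>/\<beta>^2 + 126*\<alpha>/\<beta> + 138*\<alpha>
     + 11*\<alpha>^2/\<beta>^2 + 54*\<alpha>^2/\<beta> + 78*\<alpha>^2 + 6*\<alpha>^3/\<beta> + 16*\<alpha>^3 + \<alpha>^4) / \<eta>^4"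
  using assms by (simp add: Mj_def EP_def eval_nat_numeral field_simps)

lemma taylor_rem:
  fixes \<Phi> \<Phi>' \<Phi>'' :: "real \<Rightarrow> real"
  assumes d1: "\<And>t. t \<ge> 0 \<Longrightarrow> (\<Phi> has_real_derivative \<Phi>' t) (at t within {0..})"
    and d2: "\<And>t. t \<ge> 0 \<Longrightarrow> (\<Phi>' has_real_derivative \<Phi>'' t) (at t within {0..})"
    and S: "convex S" "S \<subseteq> {0..}" "x \<in> S" and w: "\<And>t. t \<in> S \<Longrightarrow> \<bar>\<Phi>'' t - \<Phi>'' x\<bar> \<le> w"
    and z: "z \<in> S"
  shows "\<bar>\<Phi> z - \<Phi> x - \<Phi>' x * (z - x) - \<Phi>'' x / 2 * (z - x)^2\<bar> \<le> w * (z - x)^2"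
proof -
  define g1 where "g1 = (\<lambda>t. \<Phi>' t - \<Phi>' x - \<Phi>'' x * (t - x))"
  define g0 where "g0 = (\<lambda>t. \<Phi> t - \<Phi> x - \<Phi>' x * (t - x) - \<Phi>'' x / 2 * (t - x)^2)"
  have dg1: "(g1 has_field_derivative (\<Phi>'' t - \<Phi>'' x)) (at t within T)" if "t \<in> T" "T \<subseteq> S" for t T
  proof -
    have "(\<Phi>' has_field_derivative \<Phi>'' t) (at t within T)"
      by (rule DERIV_subset[OF d2]) (use that S in auto)
    then show ?thesis unfolding g1_def by (auto intro!: derivative_eq_intros)
  qed
  have dg0: "(g0 has_field_derivative g1 t) (at t within T)" if "t \<in> T" "T \<subseteq> S" for t T
  proof -
    have "(\<Phi> has_field_derivative \<Phi>' t) (at t within T)"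
      by (rule DERIV_subset[OF d1]) (use that S in auto)
    then show ?thesis unfolding g0_def g1_def by (auto intro!: derivative_eq_intros simp: field_simps)
  qed
  have b1: "\<bar>g1 t\<bar> \<le> w * \<bar>t - x\<bar>" if "t \<in> S" for t
  proof -
    have "norm (g1 t - g1 x) \<le> w * norm (t - x)"
      by (rule field_differentiable_bound[OF S(1), where f' = "\<lambda>t. \<Phi>'' t - \<Phi>'' x"])
         (use dg1 w that S in auto)
    then show ?thesis by (simp add: g1_def)
  qed
  define T where "T = closed_segment x z"
  have T: "convex T" "T \<subseteq> S" "x \<in> T" "z \<in> T"
    using closed_segment_subset[OF S(3) z S(1)] by (auto simp: T_def)
  have b2: "norm (g1 t) \<le> w * \<bar>z - x\<bar>" if "t \<in> T" for t
  proof -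
    have "dist t x \<le> dist x z" using dist_in_closed_segment[of t x z] that by (simp add: T_def)
    then have "\<bar>t - x\<bar> \<le> \<bar>z - x\<bar>" by (simp add: dist_real_def abs_minus_commute)
    moreover have "w \<ge> 0" using w[OF S(3)] by simp
    ultimately show ?thesis using b1[of t] that T(2) by (auto intro: order_trans mult_left_mono)
  qed
  have "norm (g0 z - g0 x) \<le> (w * \<bar>z - x\<bar>) * norm (z - x)"
    by (rule field_differentiable_bound[OF T(1), where f' = g1]) (use dg0 b2 T in auto)
  then show ?thesis by (simp add: g0_def power2_eq_square abs_mult)
qed

lemma decomp:
  fixes \<Phi> r :: "real \<Rightarrow> real"
  assumes pos: "\<alpha> > -1" "\<beta> > 0" "\<eta> > 0" "x \<ge> 0"
    and rdef: "\<And>z. \<Phi> z = a0 + a1 * (z - x) + a2 * (z - x)^2 + r z"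
    and rc: "continuous_on {0<..} r"
    and rglob: "\<And>z. z \<ge> 0 \<Longrightarrow> \<bar>r z\<bar> \<le> B * (z - x)^2 + 0 * (z - x)^4" and B: "B \<ge> 0"
  shows "summable (\<lambda>k. p_basis \<alpha> \<eta> k x * GG \<beta> \<eta> r k)"
    and "R_op \<alpha> \<beta> \<eta> \<Phi> x = a0 + a1 * Mj \<alpha> \<beta> \<eta> x 1 + a2 * Mj \<alpha> \<beta> \<eta> x 2
            + (\<Sum>k. p_basis \<alpha> \<eta> k x * GG \<beta> \<eta> r k)"
proof -
  let ?p = "\<lambda>k. p_basis \<alpha> \<eta> k x"
  have pnn: "?p k \<ge> 0" for k unfolding p_qq using pos by (intro qq_nonneg) auto
  have Ms: "\<And>j. j \<le> 4 \<Longrightarrow> (\<lambda>k. ?p k * GG \<beta> \<eta> (\<lambda>z. (z-x)^j) k) sums Mj \<alpha> \<beta> \<eta> x j"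
    by (rule M_sums[OF pos])
  have gb: "\<bar>GG \<beta> \<eta> r k\<bar> \<le> B * GG \<beta> \<eta> (\<lambda>z. (z-x)^2) k + 0 * GG \<beta> \<eta> (\<lambda>z. (z-x)^4) k" for k
    by (rule GG_bound(1)[OF pos(3,2) B _ rc rglob]) auto
  show sr: "summable (\<lambda>k. ?p k * GG \<beta> \<eta> r k)"
  proof (rule summable_comparison_test)
    show "\<exists>N. \<forall>n\<ge>N. norm (?p n * GG \<beta> \<eta> r n) \<le> B * (?p n * GG \<beta> \<eta> (\<lambda>z. (z-x)^2) n)"
      using gb pnn by (auto simp: abs_mult intro!: exI[of _ 0] order_trans[OF mult_left_mono[OF gb]] simp: algebra_simps)
    show "summable (\<lambda>n. B * (?p n * GG \<beta> \<eta> (\<lambda>z. (z-x)^2) n))"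
      using Ms[of 2] by (intro summable_mult) (simp add: sums_iff)
  qed
  have GGd: "GG \<beta> \<eta> \<Phi> k = a0 * GG \<beta> \<eta> (\<lambda>z. (z-x)^0) k + a1 * GG \<beta> \<eta> (\<lambda>z. (z-x)^1) k
      + a2 * GG \<beta> \<eta> (\<lambda>z. (z-x)^2) k + GG \<beta> \<eta> r k" for k
  proof (cases "k = 0")
    case True then show ?thesis by (simp add: GG_def rdef)
  next
    case False
    then have k: "k > 0" by simp
    have i: "set_integrable lborel {0<..} (\<lambda>z. I_kernel \<beta> \<eta> k z * (z-x)^j)" for j
      by (rule ej_integrable[OF pos(3,2) k])
    have ir: "set_integrable lborel {0<..} (\<lambda>z. I_kernel \<beta> \<eta> k z * r z)"
      by (rule GG_bound(2)[OF pos(3,2) B _ rc rglob]) (use k in auto)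
    have fe: "(\<lambda>z. I_kernel \<beta> \<eta> k z * \<Phi> z) = (\<lambda>z. a0 * (I_kernel \<beta> \<eta> k z * (z-x)^0) + a1 * (I_kernel \<beta> \<eta> k z * (z-x)^1)
         + a2 * (I_kernel \<beta> \<eta> k z * (z-x)^2) + I_kernel \<beta> \<eta> k z * r z)"
      by (rule ext) (simp add: rdef algebra_simps)
    have "JJ \<beta> \<eta> \<Phi> k = a0 * JJ \<beta> \<eta> (\<lambda>z. (z-x)^0) k + a1 * JJ \<beta> \<eta> (\<lambda>z. (z-x)^1) k
      + a2 * JJ \<beta> \<eta> (\<lambda>z. (z-x)^2) k + JJ \<beta> \<eta> r k"
      unfolding JJ_def fe
      using i[of 0] i[of 1] i[of 2] ir
      by (simp add: set_integral_add set_integrable_mult_right set_integral_mult_right del: power_0 power_one_right)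
    then show ?thesis using k by (simp add: GG_def)
  qed
  have "(\<lambda>k. a0 * (?p k * GG \<beta> \<eta> (\<lambda>z. (z-x)^0) k) + a1 * (?p k * GG \<beta> \<eta> (\<lambda>z. (z-x)^1) k)
      + a2 * (?p k * GG \<beta> \<eta> (\<lambda>z. (z-x)^2) k) + ?p k * GG \<beta> \<eta> r k) sums
      (a0 * Mj \<alpha> \<beta> \<eta> x 0 + a1 * Mj \<alpha> \<beta> \<eta> x 1 + a2 * Mj \<alpha> \<beta> \<eta> x 2 + (\<Sum>k. ?p k * GG \<beta> \<eta> r k))"
    by (intro sums_add sums_mult Ms summable_sums[OF sr]) auto
  moreover have "a0 * (?p k * GG \<beta> \<eta> (\<lambda>z. (z-x)^0) k) + a1 * (?p k * GG \<beta> \<eta> (\<lambda>z. (z-x)^1) k)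
      + a2 * (?p k * GG \<beta> \<eta> (\<lambda>z. (z-x)^2) k) + ?p k * GG \<beta> \<eta> r k = ?p k * GG \<beta> \<eta> \<Phi> k" for k
    unfolding GGd by (simp add: algebra_simps)
  ultimately have S: "(\<lambda>k. ?p k * GG \<beta> \<eta> \<Phi> k) sums
      (a0 + a1 * Mj \<alpha> \<beta> \<eta> x 1 + a2 * Mj \<alpha> \<beta> \<eta> x 2 + (\<Sum>k. ?p k * GG \<beta> \<eta> r k))"
    by (simp add: M0)
  have "summable (\<lambda>k. ?p k * GG \<beta> \<eta> \<Phi> k)" using S by (rule sums_summable)
  from summable_ignore_initial_segment[OF this, of 1]
  have "summable (\<lambda>k. ?p (Suc k) * GG \<beta> \<eta> \<Phi> (Suc k))" by simp
  then have "summable (\<lambda>k. ?p (Suc k) * JJ \<beta> \<eta> \<Phi> (Suc k))" by (simp add: GG_def)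
  from R_sums[OF this] S show "R_op \<alpha> \<beta> \<eta> \<Phi> x = a0 + a1 * Mj \<alpha> \<beta> \<eta> x 1 + a2 * Mj \<alpha> \<beta> \<eta> x 2
            + (\<Sum>k. ?p k * GG \<beta> \<eta> r k)"
    using sums_unique2 by blast
qed

lemma Ebound:
  fixes r :: "real \<Rightarrow> real"
  assumes pos: "\<alpha> > -1" "\<beta> > 0" "\<eta> > 0" "x \<ge> 0"
    and rc: "continuous_on {0<..} r"
    and rb: "\<And>z. z \<ge> 0 \<Longrightarrow> \<bar>r z\<bar> \<le> \<epsilon> * (z - x)^2 + K * (z - x)^4" and eK: "\<epsilon> \<ge> 0" "K \<ge> 0"
    and sr: "summable (\<lambda>k. p_basis \<alpha> \<eta> k x * GG \<beta> \<eta> r k)"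
  shows "\<bar>\<Sum>k. p_basis \<alpha> \<eta> k x * GG \<beta> \<eta> r k\<bar> \<le> \<epsilon> * Mj \<alpha> \<beta> \<eta> x 2 + K * Mj \<alpha> \<beta> \<eta> x 4"
proof -
  let ?p = "\<lambda>k. p_basis \<alpha> \<eta> k x"
  have pnn: "?p k \<ge> 0" for k unfolding p_qq using pos by (intro qq_nonneg) auto
  have gb: "\<bar>GG \<beta> \<eta> r k\<bar> \<le> \<epsilon> * GG \<beta> \<eta> (\<lambda>z. (z-x)^2) k + K * GG \<beta> \<eta> (\<lambda>z. (z-x)^4) k" for k
    by (rule GG_bound(1)[OF pos(3,2) eK rc rb])
  define g where "g = (\<lambda>k. \<epsilon> * (?p k * GG \<beta> \<eta> (\<lambda>z. (z-x)^2) k) + K * (?p k * GG \<beta> \<eta> (\<lambda>z. (z-x)^4) k))"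
  have gs: "g sums (\<epsilon> * Mj \<alpha> \<beta> \<eta> x 2 + K * Mj \<alpha> \<beta> \<eta> x 4)"
    unfolding g_def by (intro sums_add sums_mult M_sums[OF pos]) auto
  have fg: "\<bar>?p k * GG \<beta> \<eta> r k\<bar> \<le> g k" for k
  proof -
    have "\<bar>?p k * GG \<beta> \<eta> r k\<bar> = ?p k * \<bar>GG \<beta> \<eta> r k\<bar>" using pnn[of k] by (simp add: abs_mult)
    also have "\<dots> \<le> ?p k * (\<epsilon> * GG \<beta> \<eta> (\<lambda>z. (z-x)^2) k + K * GG \<beta> \<eta> (\<lambda>z. (z-x)^4) k)"
      by (rule mult_left_mono[OF gb pnn])
    finally show ?thesis by (simp add: g_def algebra_simps)
  qed
  have fs: "(\<lambda>k. ?p k * GG \<beta> \<eta> r k) sums (\<Sum>k. ?p k * GG \<beta> \<eta> r k)" using sr by (rule summable_sums)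
  have u: "(\<Sum>k. ?p k * GG \<beta> \<eta> r k) \<le> \<epsilon> * Mj \<alpha> \<beta> \<eta> x 2 + K * Mj \<alpha> \<beta> \<eta> x 4"
    by (rule sums_le[OF _ fs gs]) (use fg in \<open>auto simp: abs_le_iff\<close>)
  have l: "- (\<Sum>k. ?p k * GG \<beta> \<eta> r k) \<le> \<epsilon> * Mj \<alpha> \<beta> \<eta> x 2 + K * Mj \<alpha> \<beta> \<eta> x 4"
    by (rule sums_le[OF _ sums_minus[OF fs] gs]) (use fg in \<open>auto simp: abs_le_iff\<close>)
  show ?thesis using u l by linarith
qed

theorem mainTheorem6:
  fixes \<alpha> \<beta> :: real and \<Phi> \<Phi>' \<Phi>'' :: "real \<Rightarrow> real" and x :: real
  assumes "\<alpha> > -1" and "\<beta> > 0"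
    and "\<And>t. t \<ge> 0 \<Longrightarrow> (\<Phi> has_real_derivative \<Phi>' t) (at t within {0..})"
    and "\<And>t. t \<ge> 0 \<Longrightarrow> (\<Phi>' has_real_derivative \<Phi>'' t) (at t within {0..})"
    and "continuous_on {0..} \<Phi>" and "continuous_on {0..} \<Phi>'" and "continuous_on {0..} \<Phi>''"
    and "bounded (\<Phi> ` {0..})" and "bounded (\<Phi>' ` {0..})" and "bounded (\<Phi>'' ` {0..})"
    and "x \<ge> 0"
  shows "((\<lambda>\<eta>. \<eta> * (R_op \<alpha> \<beta> \<eta> \<Phi> x - \<Phi> x)) \<longlongrightarrow>
           (1 + \<alpha>) * \<Phi>' x + x * (3 * \<beta> + 1) / (2 * \<beta>) * \<Phi>'' x) at_top"
proof -
  note d1 = assms(3) and d2 = assms(4) and xpos = assms(11)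
  obtain B0 where B0: "\<And>t. t \<ge> 0 \<Longrightarrow> \<bar>\<Phi>'' t\<bar> \<le> B0"
    using assms(10) unfolding bounded_iff by auto
  have B0p: "B0 \<ge> 0" using B0[of 0] by simp
  define r where "r = (\<lambda>z. \<Phi> z - \<Phi> x - \<Phi>' x * (z - x) - \<Phi>'' x / 2 * (z - x)^2)"
  have rdef: "\<And>z. \<Phi> z = \<Phi> x + \<Phi>' x * (z - x) + \<Phi>'' x / 2 * (z - x)^2 + r z"
    by (simp add: r_def)
  have rc: "continuous_on {0<..} r"
  proof -
    have "continuous_on {0<..} \<Phi>" by (rule continuous_on_subset[OF assms(5)]) auto
    then show ?thesis unfolding r_def by (intro continuous_intros)
  qed
  have rglob: "\<bar>r z\<bar> \<le> (2*B0) * (z - x)^2" if "z \<ge> 0" for z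
    unfolding r_def
  proof (rule taylor_rem[OF d1 d2])
    show "convex {0::real..}" by (rule convex_real_interval)
    show "\<bar>\<Phi>'' t - \<Phi>'' x\<bar> \<le> 2 * B0" if "t \<in> {0..}" for t
      using B0[of t] B0[of x] that xpos by auto
  qed (use that xpos in auto)
  have rglob': "\<bar>r z\<bar> \<le> (2*B0) * (z - x)^2 + 0 * (z - x)^4" if "z \<ge> 0" for z
    using rglob[OF that] by simp
  have rloc: "\<exists>K\<ge>0. \<forall>z\<ge>0. \<bar>r z\<bar> \<le> \<epsilon> * (z - x)^2 + K * (z - x)^4" if eps: "\<epsilon> > 0" for \<epsilon>
  proof -
    obtain \<delta> where \<delta>: "\<delta> > 0" "\<And>t. t \<in> {0..} \<Longrightarrow> dist t x < \<delta> \<Longrightarrow> dist (\<Phi>'' t) (\<Phi>'' x) < \<epsilon>"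
    proof -
      have "x \<in> {0..}" using xpos by simp
      from bspec[OF assms(7)[unfolded continuous_on_iff] this] eps
      obtain d where "d > 0" "\<forall>t\<in>{0..}. dist t x < d \<longrightarrow> dist (\<Phi>'' t) (\<Phi>'' x) < \<epsilon>"
        by blast
      then show ?thesis using that by blast
    qed
    define S where "S = {0::real..} \<inter> ball x \<delta>"
    have S: "convex S" "S \<subseteq> {0..}" "x \<in> S"
      unfolding S_def using \<delta>(1) xpos by (auto intro!: convex_Int convex_real_interval convex_ball)
    define K where "K = 2 * B0 / \<delta>^2"
    have K: "K \<ge> 0" using B0p \<delta> by (simp add: K_def)
    have "\<bar>r z\<bar> \<le> \<epsilon> * (z - x)^2 + K * (z - x)^4" if z: "z \<ge> 0" for z
    proof (cases "\<bar>z - x\<bar> < \<delta>")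
      case True
      then have "z \<in> S" using z by (simp add: S_def dist_real_def abs_minus_commute)
      have "\<bar>r z\<bar> \<le> \<epsilon> * (z - x)^2" unfolding r_def
      proof (rule taylor_rem[OF d1 d2 S])
        show "\<bar>\<Phi>'' t - \<Phi>'' x\<bar> \<le> \<epsilon>" if "t \<in> S" for t
          using \<delta>(2)[of t] that by (auto simp: S_def dist_real_def abs_minus_commute)
      qed (use \<open>z \<in> S\<close> in auto)
      moreover have "K * (z - x)^4 \<ge> 0" using K by simp
      ultimately show ?thesis by linarith
    next
      case False
      then have "\<delta>^2 \<le> (z - x)^2" using \<delta>(1)
        by (metis abs_le_square_iff abs_of_pos not_less)
      then have "(z - x)^2 * \<delta>^2 \<le> (z - x)^2 * (z - x)^2" by (intro mult_left_mono) auto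
      then have "(z - x)^2 \<le> (z - x)^4 / \<delta>^2" using \<delta>(1) by (simp add: field_simps power4_eq_xxxx power2_eq_square)
      then have "(2*B0) * (z - x)^2 \<le> (2*B0) * ((z - x)^4 / \<delta>^2)" using B0p by (intro mult_left_mono) auto
      then have "\<bar>r z\<bar> \<le> K * (z - x)^4" using rglob[OF z] by (simp add: K_def)
      moreover have "\<epsilon> * (z - x)^2 \<ge> 0" using eps by simp
      ultimately show ?thesis by linarith
    qed
    then show ?thesis using K by blast
  qed
  define E where "E = (\<lambda>\<eta>. \<Sum>k. p_basis \<alpha> \<eta> k x * GG \<beta> \<eta> r k)"
  have dec: "\<eta> * (R_op \<alpha> \<beta> \<eta> \<Phi> x - \<Phi> x) =
      \<Phi>' x * (\<alpha> + 1) + \<Phi>'' x / 2 * (\<eta> * Mj \<alpha> \<beta> \<eta> x 2) + \<eta> * E \<eta>" if "\<eta> > 0" for \<eta>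
  proof -
    have "R_op \<alpha> \<beta> \<eta> \<Phi> x = \<Phi> x + \<Phi>' x * Mj \<alpha> \<beta> \<eta> x 1 + \<Phi>'' x / 2 * Mj \<alpha> \<beta> \<eta> x 2 + E \<eta>"
      unfolding E_def by (rule decomp(2)[OF assms(1,2) that xpos rdef rc rglob' _]) (use B0p in auto)
    then have "\<eta> * (R_op \<alpha> \<beta> \<eta> \<Phi> x - \<Phi> x) = \<Phi>' x * (\<eta> * Mj \<alpha> \<beta> \<eta> x 1) + \<Phi>'' x / 2 * (\<eta> * Mj \<alpha> \<beta> \<eta> x 2) + \<eta> * E \<eta>"
      by (simp add: algebra_simps)
    then show ?thesis using M1[OF that assms(2)] by simp
  qed
  have Ebnd: "\<bar>E \<eta>\<bar> \<le> \<epsilon> * Mj \<alpha> \<beta> \<eta> x 2 + K * Mj \<alpha> \<beta> \<eta> x 4"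
    if H: "\<eta> > 0" "\<epsilon> \<ge> 0" "K \<ge> 0" "\<And>z. z \<ge> 0 \<Longrightarrow> \<bar>r z\<bar> \<le> \<epsilon> * (z - x)^2 + K * (z - x)^4" for \<eta> \<epsilon> K
  proof -
    have sr: "summable (\<lambda>k. p_basis \<alpha> \<eta> k x * GG \<beta> \<eta> r k)"
      by (rule decomp(1)[OF assms(1,2) H(1) xpos rdef rc rglob']) (use B0p in auto)
    have rb: "\<bar>r z\<bar> \<le> \<epsilon> * (z - x)^2 + K * (z - x)^4" if "z \<ge> 0" for z
      using H(4)[OF \<open>z \<ge> 0\<close>] .
    show ?thesis unfolding E_def by (rule Ebound[OF assms(1,2) H(1) xpos rc rb H(2,3) sr])
  qed
  define c2 where "c2 = 1/\<beta> + 3 + \<alpha>/\<beta> + 4*\<alpha> + \<alpha>^2"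
  have L2: "((\<lambda>\<eta>. \<eta> * Mj \<alpha> \<beta> \<eta> x 2) \<longlongrightarrow> x * (3 + 1/\<beta>)) at_top"
  proof -
    have "((\<lambda>\<eta>. x * (3 + 1/\<beta>) + c2 / \<eta>) \<longlongrightarrow> x * (3 + 1/\<beta>) + 0) at_top"
      by (intro tendsto_intros tendsto_divide_0[OF tendsto_const] filterlim_at_top_imp_at_infinity filterlim_ident)
    moreover have "eventually (\<lambda>\<eta>. x * (3 + 1/\<beta>) + c2 / \<eta> = \<eta> * Mj \<alpha> \<beta> \<eta> x 2) at_top"
      using eventually_gt_at_top[of 0] by eventually_elim (simp add: M2[OF _ assms(2)] c2_def)
    ultimately show ?thesis by (simp add: tendsto_cong)
  qed
  have L4: "((\<lambda>\<eta>. \<eta> * Mj \<alpha> \<beta> \<eta> x 4) \<longlongrightarrow> 0) at_top"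
  proof -
    define a2 where "a2 = 3*x^2/\<beta>^2 + 18*x^2/\<beta> + 27*x^2"
    define a3 where "a3 = 6*x/\<beta>^3 + 47*x/\<beta>^2 + 150*x/\<beta> + 181*x + 14*\<alpha>*x/\<beta>^2 + 78*\<alpha>*x/\<beta> + 124*\<alpha>*x
     + 6*\<alpha>^2*x/\<beta> + 18*\<alpha>^2*x"
    define a4 where "a4 = 6/\<beta>^3 + 33/\<beta>^2 + 78/\<beta> + 75 + 6*\<alpha>/\<beta>^3 + 44*\<alpha>/\<beta>^2 + 126*\<alpha>/\<beta> + 138*\<alpha>
     + 11*\<alpha>^2/\<beta>^2 + 54*\<alpha>^2/\<beta> + 78*\<alpha>^2 + 6*\<alpha>^3/\<beta> + 16*\<alpha>^3 + \<alpha>^4"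
    have "((\<lambda>\<eta>::real. a2 / \<eta> + a3 / \<eta>^2 + a4 / \<eta>^3) \<longlongrightarrow> 0 + 0 + 0) at_top"
      by (intro tendsto_add tendsto_divide_0[OF tendsto_const] filterlim_at_top_imp_at_infinity
           filterlim_pow_at_top filterlim_ident) auto
    moreover have "eventually (\<lambda>\<eta>. a2 / \<eta> + a3 / \<eta>^2 + a4 / \<eta>^3 = \<eta> * Mj \<alpha> \<beta> \<eta> x 4) at_top"
      using eventually_gt_at_top[of 0]
    proof eventually_elim
      case (elim \<eta>)
      show ?case unfolding M4[OF elim assms(2)] a2_def[symmetric] a3_def[symmetric] a4_def[symmetric]
        using elim by (simp add: field_simps power2_eq_square power3_eq_cube power4_eq_xxxx)
    qed
    ultimately show ?thesis by (simp add: tendsto_cong)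
  qed
  have LE: "((\<lambda>\<eta>. \<eta> * E \<eta>) \<longlongrightarrow> 0) at_top"
  proof (rule tendstoI)
    fix e :: real assume e: "e > 0"
    define C where "C = x * (3 + 1/\<beta>) + 1"
    have "x * (3 + 1/\<beta>) \<ge> 0" using xpos assms(2) by (intro mult_nonneg_nonneg) auto
    then have Cp: "C > 0" unfolding C_def by linarith
    define \<epsilon> where "\<epsilon> = e / (2 * C)"
    have \<epsilon>p: "\<epsilon> > 0" using e Cp by (simp add: \<epsilon>_def)
    obtain K where K: "K \<ge> 0" "\<And>z. z \<ge> 0 \<Longrightarrow> \<bar>r z\<bar> \<le> \<epsilon> * (z - x)^2 + K * (z - x)^4"
      using rloc[OF \<epsilon>p] by blast
    have ev1: "eventually (\<lambda>\<eta>. \<eta> * Mj \<alpha> \<beta> \<eta> x 2 < C) at_top"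
      by (rule order_tendstoD(2)[OF L2]) (simp add: C_def)
    have ev2: "eventually (\<lambda>\<eta>. K * (\<eta> * Mj \<alpha> \<beta> \<eta> x 4) < e/2) at_top"
      by (rule order_tendstoD(2)[OF tendsto_mult_left[OF L4, of K]]) (use e in simp)
    show "eventually (\<lambda>\<eta>. dist (\<eta> * E \<eta>) 0 < e) at_top"
      using ev1 ev2 eventually_gt_at_top[of 0]
    proof eventually_elim
      case (elim \<eta>)
      have "\<bar>\<eta> * E \<eta>\<bar> = \<eta> * \<bar>E \<eta>\<bar>" using elim(3) by (simp add: abs_mult)
      also have "\<dots> \<le> \<eta> * (\<epsilon> * Mj \<alpha> \<beta> \<eta> x 2 + K * Mj \<alpha> \<beta> \<eta> x 4)"
        using Ebnd[OF elim(3) less_imp_le[OF \<epsilon>p] K(1) K(2)] elim(3) by (intro mult_left_mono) auto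
      also have "\<dots> = \<epsilon> * (\<eta> * Mj \<alpha> \<beta> \<eta> x 2) + K * (\<eta> * Mj \<alpha> \<beta> \<eta> x 4)" by (simp add: algebra_simps)
      also have "\<dots> < \<epsilon> * C + e/2" using elim(1,2) \<epsilon>p by (intro add_less_le_mono mult_strict_left_mono) auto
      also have "\<epsilon> * C = e/2" using Cp by (simp add: \<epsilon>_def)
      finally show ?case by (simp add: dist_real_def)
    qed
  qed
  have "((\<lambda>\<eta>. \<Phi>' x * (\<alpha> + 1) + \<Phi>'' x / 2 * (\<eta> * Mj \<alpha> \<beta> \<eta> x 2) + \<eta> * E \<eta>) \<longlongrightarrow>
        \<Phi>' x * (\<alpha> + 1) + \<Phi>'' x / 2 * (x * (3 + 1/\<beta>)) + 0) at_top"
    by (intro tendsto_add tendsto_const tendsto_mult_left L2 LE)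
  moreover have "eventually (\<lambda>\<eta>. \<Phi>' x * (\<alpha> + 1) + \<Phi>'' x / 2 * (\<eta> * Mj \<alpha> \<beta> \<eta> x 2) + \<eta> * E \<eta> =
      \<eta> * (R_op \<alpha> \<beta> \<eta> \<Phi> x - \<Phi> x)) at_top"
    using eventually_gt_at_top[of 0] by eventually_elim (simp add: dec)
  moreover have "\<Phi>' x * (\<alpha> + 1) + \<Phi>'' x / 2 * (x * (3 + 1/\<beta>)) + 0 =
      (1 + \<alpha>) * \<Phi>' x + x * (3 * \<beta> + 1) / (2 * \<beta>) * \<Phi>'' x"
    using assms(2) by (simp add: field_simps)
  ultimately show ?thesis by (simp add: tendsto_cong)
qed

end
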